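(* For every preference profile $p\in\mathcal{P}$, the stabilizer $\mathrm{Stab}_{G^*}(p)=\{\varphi\in G^*: p^\varphi=p\}$ is a semiregular subgroup of $G^*$.
   Context: Fix $n\ge 2$, $W=\{1,\dots,n\}$, $M=\{n+1,\dots,2n\}$, $I=W\cup M$. Permutations compose right-to-left. A preference profile is a function $p$ on $I$ assigning to each $x\in W$ a linear order $p(x)$ on $M$ and to each $y\in M$ a linear order $p(y)$ on $W$; $\mathcal{P}$ is the set of preference profiles. $G^*=\{\varphi\in\mathrm{Sym}(I):\{\varphi(W),\varphi(M)\}=\{W,M\}\}$. For a linear order $R$ on $X\subseteq I$ and $\varphi\in\mathrm{Sym}(I)$, $\varphi R$ is the relation on $\varphi(X)$ with $(a,b)\in\varphi R$ iff $(\varphi^{-1}(a),\varphi^{-1}(b))\in R$. For $\varphi\in G^*$, $p^\varphi(z)=\varphi\,p(\varphi^{-1}(z))$. A subgroup $S\le\mathrm{Sym}(I)$ is semiregular if for every $z\in I$ the only element of $S$ fixing $z$ is the identity. *)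

theory Defs
  imports "HOL-Combinatorics.Permutations" "HOL-Algebra.Group"
begin

definition Wset :: "nat \<Rightarrow> nat set" where "Wset n = {1..n}"
definition Mset :: "nat \<Rightarrow> nat set" where "Mset n = {n+1..2*n}"
definition Iset :: "nat \<Rightarrow> nat set" where "Iset n = Wset n \<union> Mset n"

text \<open>Preference profiles: a function on I; each w in W gets a linear order on M,
  each m in M a linear order on W (values outside I are irrelevant).\<close>
definition profiles :: "nat \<Rightarrow> (nat \<Rightarrow> (nat \<times> nat) set) set" where
  "profiles n = {p. (\<forall>x\<in>Wset n. linear_order_on (Mset n) (p x)) \<and>
                     (\<forall>y\<in>Mset n. linear_order_on (Wset n) (p y))}"

definition Gstar :: "nat \<Rightarrow> (nat \<Rightarrow> nat) set" where
  "Gstar n = {\<phi>. \<phi> permutes Iset n \<and>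
                 {\<phi> ` Wset n, \<phi> ` Mset n} = {Wset n, Mset n}}"

definition Gstar_grp :: "nat \<Rightarrow> (nat \<Rightarrow> nat) monoid" where
  "Gstar_grp n = \<lparr>carrier = Gstar n, mult = (\<circ>), one = id\<rparr>"

definition rel_act :: "(nat \<Rightarrow> nat) \<Rightarrow> (nat \<times> nat) set \<Rightarrow> (nat \<times> nat) set" where
  "rel_act \<phi> R = {(a, b). (inv_into UNIV \<phi> a, inv_into UNIV \<phi> b) \<in> R}"

definition prof_act :: "(nat \<Rightarrow> (nat \<times> nat) set) \<Rightarrow> (nat \<Rightarrow> nat) \<Rightarrow> nat \<Rightarrow> (nat \<times> nat) set" where
  "prof_act p \<phi> z = rel_act \<phi> (p (inv_into UNIV \<phi> z))"

definition Stab :: "nat \<Rightarrow> (nat \<Rightarrow> (nat \<times> nat) set) \<Rightarrow> (nat \<Rightarrow> nat) set" where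
  "Stab n p = {\<phi> \<in> Gstar n. \<forall>z\<in>Iset n. prof_act p \<phi> z = p z}"

definition semiregular :: "nat \<Rightarrow> (nat \<Rightarrow> nat) set \<Rightarrow> bool" where
  "semiregular n S \<longleftrightarrow> (\<forall>z\<in>Iset n. \<forall>\<phi>\<in>S. \<phi> z = z \<longrightarrow> \<phi> = id)"

end

theory Submission
  imports Defs
begin

lemma chain_auto_id:
  assumes fin: "finite A" and lin: "linear_order_on A R" and bij: "bij_betw f A A"
    and pres: "\<And>a b. a \<in> A \<Longrightarrow> b \<in> A \<Longrightarrow> (f a, f b) \<in> R \<longleftrightarrow> (a, b) \<in> R"
    and aA: "a \<in> A"
  shows "f a = a"
proof (rule ccontr)
  assume ne: "f a \<noteq> a"
  define D where "D x = {b \<in> A. (b, x) \<in> R}" for x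
  have refl: "\<And>x. x \<in> A \<Longrightarrow> (x,x) \<in> R" using lin
    unfolding linear_order_on_def partial_order_on_def preorder_on_def refl_on_def by blast
  have tr: "trans R" and an: "antisym R" and tot: "total_on A R" using lin
    unfolding linear_order_on_def partial_order_on_def preorder_on_def by auto
  have fa: "f a \<in> A" using bij aA bij_betwE by blast
  have img: "f ` D x = D (f x)" if "x \<in> A" for x
  proof
    show "f ` D x \<subseteq> D (f x)" using pres that bij unfolding D_def bij_betw_def by auto
    show "D (f x) \<subseteq> f ` D x"
    proof
      fix c assume "c \<in> D (f x)"
      then have c: "c \<in> A" "(c, f x) \<in> R" unfolding D_def by auto
      then obtain b where b: "b \<in> A" "c = f b" using bij unfolding bij_betw_def by auto
      then have "(b, x) \<in> R" using pres c that by auto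
      then show "c \<in> f ` D x" using b unfolding D_def by auto
    qed
  qed
  have inj: "inj_on f (D x)" for x using bij unfolding bij_betw_def D_def
    by (auto intro: inj_on_subset)
  have cardeq: "card (D a) = card (D (f a))"
    using img[OF aA] card_image[OF inj] by metis
  have finD: "finite (D x)" for x using fin unfolding D_def by auto
  have strict: "D x \<subset> D y" if "x \<in> A" "y \<in> A" "x \<noteq> y" "(x,y) \<in> R" for x y
  proof
    show "D x \<subseteq> D y" using tr that unfolding D_def trans_def by blast
    have "y \<in> D y" using refl that unfolding D_def by auto
    moreover have "y \<notin> D x" using an that unfolding D_def antisym_def by blast
    ultimately show "D x \<noteq> D y" by blast
  qed
  from tot ne aA fa have "(a, f a) \<in> R \<or> (f a, a) \<in> R" unfolding total_on_def by metis
  then show False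
  proof
    assume "(a, f a) \<in> R"
    then have "D a \<subset> D (f a)" using strict aA fa ne by auto
    then have "card (D a) < card (D (f a))" using finD psubset_card_mono by blast
    then show False using cardeq by simp
  next
    assume "(f a, a) \<in> R"
    then have "D (f a) \<subset> D a" using strict aA fa ne by auto
    then have "card (D (f a)) < card (D a)" using finD psubset_card_mono by blast
    then show False using cardeq by simp
  qed
qed

lemma WM_facts:
  assumes "n \<ge> 1"
  shows "Wset n \<inter> Mset n = {}" "Wset n \<noteq> Mset n" "finite (Wset n)" "finite (Mset n)"
    "Wset n \<noteq> {}"
  using assms unfolding Wset_def Mset_def by auto

lemma rel_act_comp:
  assumes "bij f" "bij g"
  shows "rel_act (f \<circ> g) R = rel_act f (rel_act g R)"
  using assms unfolding rel_act_def by (auto simp: o_inv_distrib)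

lemma rel_act_id: "rel_act id R = R"
  unfolding rel_act_def by (auto simp: inv_id)

lemma Gstar_bij: "\<phi> \<in> Gstar n \<Longrightarrow> bij \<phi>"
  unfolding Gstar_def using permutes_bij by blast

lemma Gstar_sides:
  assumes "\<phi> \<in> Gstar n"
  shows "(\<phi> ` Wset n = Wset n \<and> \<phi> ` Mset n = Mset n) \<or> (\<phi> ` Wset n = Mset n \<and> \<phi> ` Mset n = Wset n)"
proof -
  have "{\<phi> ` Wset n, \<phi> ` Mset n} = {Wset n, Mset n}"
    using assms unfolding Gstar_def by auto
  then show ?thesis unfolding doubleton_eq_iff .
qed

lemma Gstar_comp:
  assumes "n \<ge> 1" "\<phi> \<in> Gstar n" "\<psi> \<in> Gstar n"
  shows "\<phi> \<circ> \<psi> \<in> Gstar n"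
proof -
  have p: "\<phi> \<circ> \<psi> permutes Iset n" using assms unfolding Gstar_def
    by (auto intro: permutes_compose)
  have "(\<phi> ` (\<psi> ` Wset n) = Wset n \<and> \<phi> ` (\<psi> ` Mset n) = Mset n) \<or>
        (\<phi> ` (\<psi> ` Wset n) = Mset n \<and> \<phi> ` (\<psi> ` Mset n) = Wset n)"
    using Gstar_sides[OF assms(2)] Gstar_sides[OF assms(3)] by metis
  then have "{\<phi> ` (\<psi> ` Wset n), \<phi> ` (\<psi> ` Mset n)} = {Wset n, Mset n}"
    unfolding doubleton_eq_iff .
  then show ?thesis using p unfolding Gstar_def by (simp add: image_comp)
qed

lemma Gstar_inv:
  assumes "n \<ge> 1" "\<phi> \<in> Gstar n"
  shows "(inv_into UNIV \<phi>) \<in> Gstar n"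
proof -
  have d: "Wset n \<noteq> Mset n" using WM_facts assms(1) by auto
  have pp: "\<phi> permutes Iset n" using assms unfolding Gstar_def by auto
  have p: "(inv_into UNIV \<phi>) permutes Iset n" using assms unfolding Gstar_def
    by (auto intro: permutes_inv)
  have b: "bij \<phi>" using pp permutes_bij by blast
  have ii: "(inv_into UNIV \<phi>) ` (\<phi> ` X) = X" for X using b by (simp add: bij_is_inj image_inv_f_f)
  have "(\<phi> ` Wset n = Wset n \<and> \<phi> ` Mset n = Mset n) \<or> (\<phi> ` Wset n = Mset n \<and> \<phi> ` Mset n = Wset n)"
    using Gstar_sides[OF assms(2)] .
  then have "{(inv_into UNIV \<phi>) ` Wset n, (inv_into UNIV \<phi>) ` Mset n} = {Wset n, Mset n}"
  proof
    assume h: "\<phi> ` Wset n = Wset n \<and> \<phi> ` Mset n = Mset n"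
    have "(inv_into UNIV \<phi>) ` Wset n = Wset n" using ii[of "Wset n"] h by simp
    moreover have "(inv_into UNIV \<phi>) ` Mset n = Mset n" using ii[of "Mset n"] h by simp
    ultimately show ?thesis by simp
  next
    assume h: "\<phi> ` Wset n = Mset n \<and> \<phi> ` Mset n = Wset n"
    have "(inv_into UNIV \<phi>) ` Mset n = Wset n" using ii[of "Wset n"] h by simp
    moreover have "(inv_into UNIV \<phi>) ` Wset n = Mset n" using ii[of "Mset n"] h by simp
    ultimately show ?thesis by auto
  qed
  then show ?thesis using p unfolding Gstar_def by simp
qed

lemma Gstar_group:
  assumes "n \<ge> 1"
  shows "group (Gstar_grp n)"
proof (rule groupI)
  fix x y assume "x \<in> carrier (Gstar_grp n)" "y \<in> carrier (Gstar_grp n)"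
  then show "x \<otimes>\<^bsub>Gstar_grp n\<^esub> y \<in> carrier (Gstar_grp n)"
    using Gstar_comp assms unfolding Gstar_grp_def by auto
next
  show "\<one>\<^bsub>Gstar_grp n\<^esub> \<in> carrier (Gstar_grp n)"
    unfolding Gstar_grp_def Gstar_def using permutes_id by auto
next
  fix x y z show "x \<otimes>\<^bsub>Gstar_grp n\<^esub> y \<otimes>\<^bsub>Gstar_grp n\<^esub> z =
           x \<otimes>\<^bsub>Gstar_grp n\<^esub> (y \<otimes>\<^bsub>Gstar_grp n\<^esub> z)"
    unfolding Gstar_grp_def by (simp add: o_assoc)
next
  fix x show "\<one>\<^bsub>Gstar_grp n\<^esub> \<otimes>\<^bsub>Gstar_grp n\<^esub> x = x"
    unfolding Gstar_grp_def by simp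
next
  fix x assume x: "x \<in> carrier (Gstar_grp n)"
  then have "(inv_into UNIV x) \<in> Gstar n" "(inv_into UNIV x) \<circ> x = id"
    using Gstar_inv assms Gstar_bij unfolding Gstar_grp_def
    by (auto simp: bij_is_inj)
  then show "\<exists>y\<in>carrier (Gstar_grp n). y \<otimes>\<^bsub>Gstar_grp n\<^esub> x = \<one>\<^bsub>Gstar_grp n\<^esub>"
    unfolding Gstar_grp_def by auto
qed

lemma Gstar_perm_I:
  "\<phi> \<in> Gstar n \<Longrightarrow> z \<in> Iset n \<Longrightarrow> \<phi> z \<in> Iset n"
  "\<phi> \<in> Gstar n \<Longrightarrow> z \<in> Iset n \<Longrightarrow> (inv_into UNIV \<phi>) z \<in> Iset n"
proof -
  assume "\<phi> \<in> Gstar n" "z \<in> Iset n"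
  then show "\<phi> z \<in> Iset n" unfolding Gstar_def by (simp add: permutes_in_image)
next
  assume a: "\<phi> \<in> Gstar n" "z \<in> Iset n"
  then have "(inv_into UNIV \<phi>) permutes Iset n" unfolding Gstar_def by (simp add: permutes_inv)
  then show "(inv_into UNIV \<phi>) z \<in> Iset n" using a(2) by (simp add: permutes_in_image)
qed

theorem theorem12:
  fixes n :: nat and p :: "nat \<Rightarrow> (nat \<times> nat) set"
  assumes "n \<ge> 2" and "p \<in> profiles n"
  shows "subgroup (Stab n p) (Gstar_grp n) \<and> semiregular n (Stab n p)"
proof
  have n1: "n \<ge> 1" using assms by simp
  interpret G: group "Gstar_grp n" using Gstar_group[OF n1] .
  show "subgroup (Stab n p) (Gstar_grp n)"
  proof (rule G.subgroupI)
    show "Stab n p \<subseteq> carrier (Gstar_grp n)" unfolding Stab_def Gstar_grp_def by auto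
    have "id \<in> Gstar n" unfolding Gstar_def using permutes_id by auto
    then have "id \<in> Stab n p" unfolding Stab_def prof_act_def by (simp add: inv_id rel_act_id)
    then show "Stab n p \<noteq> {}" by auto
  next
    fix a b assume a: "a \<in> Stab n p" and b: "b \<in> Stab n p"
    have aG: "a \<in> Gstar n" and bG: "b \<in> Gstar n" using a b unfolding Stab_def by auto
    have ba: "bij a" "bij b" using aG bG Gstar_bij by auto
    have "prof_act p (a \<circ> b) z = p z" if z: "z \<in> Iset n" for z
    proof -
      have iz: "(inv_into UNIV a) z \<in> Iset n" using Gstar_perm_I aG z by blast
      have "prof_act p (a \<circ> b) z = rel_act a (rel_act b (p ((inv_into UNIV b) ((inv_into UNIV a) z))))"
        unfolding prof_act_def using ba by (simp add: o_inv_distrib rel_act_comp)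
      also have "rel_act b (p ((inv_into UNIV b) ((inv_into UNIV a) z))) = p ((inv_into UNIV a) z)"
        using b iz unfolding Stab_def prof_act_def by auto
      also have "rel_act a (p ((inv_into UNIV a) z)) = p z"
        using a z unfolding Stab_def prof_act_def by auto
      finally show ?thesis .
    qed
    then show "a \<otimes>\<^bsub>Gstar_grp n\<^esub> b \<in> Stab n p"
      using Gstar_comp[OF n1 aG bG] unfolding Stab_def Gstar_grp_def by auto
  next
    fix a assume a: "a \<in> Stab n p"
    have aG: "a \<in> Gstar n" using a unfolding Stab_def by auto
    have ba: "bij a" using aG Gstar_bij by auto
    have iG: "(inv_into UNIV a) \<in> Gstar n" using Gstar_inv n1 aG by auto
    have ia: "(inv_into UNIV a) \<circ> a = id" using ba by (simp add: bij_is_inj)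
    have eq: "inv\<^bsub>Gstar_grp n\<^esub> a = (inv_into UNIV a)"
      by (rule G.inv_equality) (use ia aG iG in \<open>auto simp: Gstar_grp_def\<close>)
    have "prof_act p ((inv_into UNIV a)) z = p z" if z: "z \<in> Iset n" for z
    proof -
      have az: "a z \<in> Iset n" using Gstar_perm_I aG z by blast
      have "p (a z) = rel_act a (p z)"
        using a az unfolding Stab_def prof_act_def by (auto simp: ba bij_is_inj)
      then have "prof_act p ((inv_into UNIV a)) z = rel_act ((inv_into UNIV a)) (rel_act a (p z))"
        unfolding prof_act_def by (simp add: ba inv_inv_eq)
      also have "\<dots> = p z" using ba ia
        by (metis rel_act_comp rel_act_id bij_imp_bij_inv)
      finally show ?thesis .
    qed
    then show "inv\<^bsub>Gstar_grp n\<^esub> a \<in> Stab n p"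
      unfolding eq using iG unfolding Stab_def by auto
  qed
  show "semiregular n (Stab n p)"
    unfolding semiregular_def
  proof (intro ballI impI)
    fix z \<phi> assume z: "z \<in> Iset n" and ph: "\<phi> \<in> Stab n p" and fz: "\<phi> z = z"
    have phG: "\<phi> \<in> Gstar n" using ph unfolding Stab_def by auto
    have perm: "\<phi> permutes Iset n" using phG unfolding Gstar_def by auto
    have b: "bij \<phi>" using phG Gstar_bij by auto
    have d: "Wset n \<inter> Mset n = {}" "Wset n \<noteq> Mset n" "finite (Wset n)" "finite (Mset n)"
      using WM_facts[OF n1] by auto
    have sides: "{\<phi> ` Wset n, \<phi> ` Mset n} = {Wset n, Mset n}"
      using phG unfolding Gstar_def by auto
    have stab: "rel_act \<phi> (p y) = p y" if "y \<in> Iset n" "\<phi> y = y" for y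
    proof -
      have "(inv_into UNIV \<phi>) y = y" using that b by (metis bij_is_inj inv_f_f)
      then show ?thesis using ph that unfolding Stab_def prof_act_def by auto
    qed
    have fixY: "\<forall>x\<in>Y. \<phi> x = x"
      if y: "y \<in> Iset n" "\<phi> y = y" and Y: "finite Y" "\<phi> ` Y = Y" and lo: "linear_order_on Y (p y)"
      for y Y
    proof
      fix x assume x: "x \<in> Y"
      have ij: "inj \<phi>" using b by (rule bij_is_inj)
      have bY: "bij_betw \<phi> Y Y" unfolding bij_betw_def using Y(2) inj_on_subset[OF ij] by blast
      have pr: "(\<phi> a, \<phi> c) \<in> p y \<longleftrightarrow> (a, c) \<in> p y" for a c
      proof -
        have "(\<phi> a, \<phi> c) \<in> rel_act \<phi> (p y) \<longleftrightarrow> (a, c) \<in> p y"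
          unfolding rel_act_def using inv_f_f[OF ij] by simp
        then show ?thesis using stab[OF y] by simp
      qed
      show "\<phi> x = x" by (rule chain_auto_id[OF Y(1) lo bY pr x])
    qed
    have prof: "\<forall>x\<in>Wset n. linear_order_on (Mset n) (p x)" "\<forall>y\<in>Mset n. linear_order_on (Wset n) (p y)"
      using assms(2) unfolding profiles_def by auto
    have WI: "Wset n \<subseteq> Iset n" and MI: "Mset n \<subseteq> Iset n" unfolding Iset_def by auto
    have both: "\<phi> ` Wset n = Wset n \<and> \<phi> ` Mset n = Mset n"
    proof -
      have "(\<phi> ` Wset n = Wset n \<and> \<phi> ` Mset n = Mset n) \<or> (\<phi> ` Wset n = Mset n \<and> \<phi> ` Mset n = Wset n)"
        using Gstar_sides[OF phG] .
      moreover have "z \<in> Wset n \<or> z \<in> Mset n" using z unfolding Iset_def by auto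
      ultimately show ?thesis using fz d by (metis disjoint_iff imageI)
    qed
    have fixall: "\<forall>x\<in>Iset n. \<phi> x = x"
    proof (cases "z \<in> Wset n")
      case True
      have fM: "\<forall>x\<in>Mset n. \<phi> x = x" using fixY[OF z fz d(4)] both prof True by auto
      obtain m where m: "m \<in> Mset n" using n1 unfolding Mset_def by force
      have fW: "\<forall>x\<in>Wset n. \<phi> x = x" using fixY[of m "Wset n"] m MI fM both prof d by auto
      show ?thesis using fM fW unfolding Iset_def by auto
    next
      case False
      then have zM: "z \<in> Mset n" using z unfolding Iset_def by auto
      have fW: "\<forall>x\<in>Wset n. \<phi> x = x" using fixY[OF z fz d(3)] both prof zM by auto
      obtain w where w: "w \<in> Wset n" using n1 unfolding Wset_def by force
      have fM: "\<forall>x\<in>Mset n. \<phi> x = x" using fixY[of w "Mset n"] w WI fW both prof d by auto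
      show ?thesis using fM fW unfolding Iset_def by auto
    qed
    show "\<phi> = id"
    proof
      fix x show "\<phi> x = id x"
        using fixall perm unfolding permutes_def by (cases "x \<in> Iset n") auto
    qed
  qed
qed

end
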